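(* If a grid-labelled graph $G$ satisfies $D(G)=D(G^\Gamma)$, then the corresponding density matrix $\rho(G)$ has positive semidefinite partial transpose, whether $G$ is interpreted as an $L$-graph, a $Q$-graph, a weighted ($L$- or $Q$-) graph, or a hybrid graph.
   Context: Grid-labelled graph: vertices $(i,j)$ on a grid, vertex $(i,j)$ identified with $|ij\rangle\in\mathbb{C}^{m_1}\otimes\mathbb{C}^{m_2}$. An $L$-edge $\{(i,j),(k,l)\}$ has state $\frac1{\sqrt2}(|ij\rangle-|kl\rangle)$ and a $Q$-edge has state $\frac1{\sqrt2}(|ij\rangle+|kl\rangle)$; an $L$-graph has only $L$-edges, a $Q$-graph only $Q$-edges, a hybrid graph both kinds; edges may carry positive weights $w_e$. The density matrix is $\rho(G)=\frac{1}{\sum_e w_e}\sum_e w_e|e\rangle\langle e|$, i.e. the normalized Laplacian ($D-A$, $D+A$, or $L(S_l)+Q(S_q)$ for hybrid graphs with $S_l,S_q$ the $L$- and $Q$-subgraphs). $D(G)$ is the diagonal matrix of (weighted) vertex degrees. The partial transpose graph $G^\Gamma$ has the same vertices and contains edge $\{(i,l),(k,j)\}$ (same type and weight) iff $G$ contains edge $\{(i,j),(k,l)\}$. The partial transpose is taken with respect to either factor of $\mathbb{C}^{m_1}\otimes\mathbb{C}^{m_2}$. *)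

theory Defs
  imports Complex_Main
begin

type_synonym vtx = "nat \<times> nat"
type_synonym edge = "vtx set"

text \<open>Vertex set of the grid; vertex (i,j) corresponds to basis vector |ij> of C^m1 (x) C^m2.\<close>
definition grid :: "nat \<Rightarrow> nat \<Rightarrow> vtx set" where
  "grid m1 m2 = {0..<m1} \<times> {0..<m2}"

definition hybrid_graph :: "nat \<Rightarrow> nat \<Rightarrow> edge set \<Rightarrow> edge set \<Rightarrow> (edge \<Rightarrow> real) \<Rightarrow> bool" where
  "hybrid_graph m1 m2 EL EQ w \<longleftrightarrow> EL \<inter> EQ = {} \<and>
     (\<forall>e\<in>EL \<union> EQ. card e = 2 \<and> e \<subseteq> grid m1 m2 \<and> w e > 0)"

text \<open>Edge state vectors: for e = {u,v} with u the chosen first vertex,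
  L-edge: (|u> - |v>)/sqrt 2,  Q-edge: (|u> + |v>)/sqrt 2.
  (The projector |e><e| does not depend on the chosen orientation.)\<close>
definition ket_L :: "edge \<Rightarrow> vtx \<Rightarrow> complex" where
  "ket_L e x = (if x \<in> e then (if x = (SOME u. u \<in> e) then 1 else -1) / complex_of_real (sqrt 2) else 0)"

definition ket_Q :: "edge \<Rightarrow> vtx \<Rightarrow> complex" where
  "ket_Q e x = (if x \<in> e then 1 / complex_of_real (sqrt 2) else 0)"

definition density :: "edge set \<Rightarrow> edge set \<Rightarrow> (edge \<Rightarrow> real) \<Rightarrow> vtx \<Rightarrow> vtx \<Rightarrow> complex" where
  "density EL EQ w x y =
     complex_of_real (1 / (\<Sum>e\<in>EL \<union> EQ. w e)) *
     ((\<Sum>e\<in>EL. complex_of_real (w e) * ket_L e x * cnj (ket_L e y)) +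
      (\<Sum>e\<in>EQ. complex_of_real (w e) * ket_Q e x * cnj (ket_Q e y)))"

definition wdegree :: "edge set \<Rightarrow> (edge \<Rightarrow> real) \<Rightarrow> vtx \<Rightarrow> real" where
  "wdegree E w x = (\<Sum>e\<in>{e\<in>E. x \<in> e}. w e)"

definition degree_matrix :: "edge set \<Rightarrow> (edge \<Rightarrow> real) \<Rightarrow> vtx \<Rightarrow> vtx \<Rightarrow> complex" where
  "degree_matrix E w x y = (if x = y then complex_of_real (wdegree E w x) else 0)"

definition pt_edge :: "edge \<Rightarrow> edge" where
  "pt_edge e = {(fst u, snd v) | u v. u \<in> e \<and> v \<in> e \<and> u \<noteq> v}"

text \<open>The partial transpose graph G^Gamma: L-edges pt_edge ` EL, Q-edges pt_edge ` EQ,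
  the edge pt_edge e carrying the weight of e (pt_edge is an involution on edges).\<close>
definition pt_weight :: "(edge \<Rightarrow> real) \<Rightarrow> edge \<Rightarrow> real" where
  "pt_weight w f = w (pt_edge f)"

definition ptranspose2 :: "(vtx \<Rightarrow> vtx \<Rightarrow> complex) \<Rightarrow> vtx \<Rightarrow> vtx \<Rightarrow> complex" where
  "ptranspose2 A x y = A (fst x, snd y) (fst y, snd x)"

definition ptranspose1 :: "(vtx \<Rightarrow> vtx \<Rightarrow> complex) \<Rightarrow> vtx \<Rightarrow> vtx \<Rightarrow> complex" where
  "ptranspose1 A x y = A (fst y, snd x) (fst x, snd y)"

definition psd :: "vtx set \<Rightarrow> (vtx \<Rightarrow> vtx \<Rightarrow> complex) \<Rightarrow> bool" where
  "psd V A \<longleftrightarrow> (\<forall>v :: vtx \<Rightarrow> complex.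
     let q = (\<Sum>x\<in>V. \<Sum>y\<in>V. cnj (v x) * A x y * v y) in q \<in> \<real> \<and> Re q \<ge> 0)"

end

theory Submission
  imports Defs
begin

lemma sqrt2c: "complex_of_real (sqrt 2) * complex_of_real (sqrt 2) = 2"
proof -
  have "sqrt 2 * sqrt 2 = (2::real)" by simp
  then have "complex_of_real (sqrt 2 * sqrt 2) = 2" by simp
  then show ?thesis by (simp only: of_real_mult)
qed

lemma ketL_prod:
  assumes "card e = 2"
  shows "ket_L e a * cnj (ket_L e b) = (if a \<in> e \<and> b \<in> e then (if a = b then 1/2 else -1/2) else 0)"
proof -
  obtain p q where e: "e = {p, q}" "p \<noteq> q" using assms by (meson card_2_iff)
  define s where "s = (SOME u. u \<in> e)"
  define r where "r = complex_of_real (sqrt 2)"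
  have s: "s \<in> e" unfolding s_def using e by (metis insertI1 someI_ex)
  have r: "cnj r = r" "r * r = 2" "r \<noteq> 0" unfolding r_def using sqrt2c by auto
  have k: "ket_L e z = (if z \<in> e then (if z = s then 1 else -1) / r else 0)" for z
    unfolding ket_L_def s_def r_def by simp
  have cj: "cnj ((if z = s then 1 else -1) / r) = (if z = s then 1 else -1) / r" for z
    using r(1) by simp
  have sq: "(1 / r) * (1 / r) = 1/2" "(-1 / r) * (-1 / r) = 1/2" "(1 / r) * (-1 / r) = -1/2" "(-1 / r) * (1 / r) = -1/2"
    using r(2) by (simp_all add: field_simps)
  show ?thesis
  proof (cases "a \<in> e \<and> b \<in> e")
    case False
    then show ?thesis unfolding k by auto
  next
    case True
    have kk: "ket_L e a * cnj (ket_L e b) = ((if a = s then 1 else -1) / r) * ((if b = s then 1 else -1) / r)"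
      unfolding k using True cj by simp
    show ?thesis
    proof (cases "a = b")
      case True
      then show ?thesis using kk sq \<open>a \<in> e \<and> b \<in> e\<close> by (cases "b = s") simp_all
    next
      case False
      have "(a = s \<and> b \<noteq> s) \<or> (b = s \<and> a \<noteq> s)" using False True s e by blast
      then show ?thesis
      proof
        assume "a = s \<and> b \<noteq> s" then show ?thesis using kk sq(3) True False by simp
      next
        assume "b = s \<and> a \<noteq> s" then show ?thesis using kk sq(4) True False by simp
      qed
    qed
  qed
qed

lemma ketQ_prod:
  shows "ket_Q e a * cnj (ket_Q e b) = (if a \<in> e \<and> b \<in> e then 1/2 else 0)"
  unfolding ket_Q_def by (auto simp: divide_simps sqrt2c)

lemma pt_edge_pair:
  assumes "p \<noteq> q"
  shows "pt_edge {p, q} = {(fst p, snd q), (fst q, snd p)}"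
proof -
  obtain p1 p2 q1 q2 where pq: "p = (p1,p2)" "q = (q1,q2)" by (cases p, cases q) auto
  show ?thesis
  proof (rule set_eqI, rule iffI)
    fix z assume "z \<in> pt_edge {p, q}"
    then show "z \<in> {(fst p, snd q), (fst q, snd p)}" unfolding pt_edge_def by auto
  next
    fix z assume z: "z \<in> {(fst p, snd q), (fst q, snd p)}"
    have "(fst p, snd q) \<in> pt_edge {p, q}" unfolding pt_edge_def using assms
      by (intro CollectI exI[of _ p] exI[of _ q]) auto
    moreover have "(fst q, snd p) \<in> pt_edge {p, q}" unfolding pt_edge_def using assms
      by (intro CollectI exI[of _ q] exI[of _ p]) auto
    ultimately show "z \<in> pt_edge {p, q}" using z by auto
  qed
qed

lemma pt_edge_card:
  assumes "card e = 2" shows "card (pt_edge e) = 2" "pt_edge (pt_edge e) = e"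
proof -
  obtain p q where e: "e = {p, q}" "p \<noteq> q" using assms by (meson card_2_iff)
  have ne: "(fst p, snd q) \<noteq> (fst q, snd p)" using e(2) by (auto simp: prod_eq_iff)
  show "card (pt_edge e) = 2" using ne e by (simp add: pt_edge_pair)
  show "pt_edge (pt_edge e) = e" using ne e by (auto simp: pt_edge_pair)
qed

lemma pt_edge_mem:
  assumes "card e = 2" "x \<noteq> y"
  shows "((fst x, snd y) \<in> e \<and> (fst y, snd x) \<in> e) \<longleftrightarrow> (x \<in> pt_edge e \<and> y \<in> pt_edge e)"
proof -
  obtain p q where e: "e = {p, q}" "p \<noteq> q" using assms by (meson card_2_iff)
  obtain x1 x2 y1 y2 p1 p2 q1 q2 where pr: "x = (x1,x2)" "y = (y1,y2)" "p = (p1,p2)" "q = (q1,q2)"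
    by (cases x, cases y, cases p, cases q) auto
  have "(((x1,y2) = (p1,p2) \<or> (x1,y2) = (q1,q2)) \<and> ((y1,x2) = (p1,p2) \<or> (y1,x2) = (q1,q2))) \<longleftrightarrow>
    (((x1,x2) = (p1,q2) \<or> (x1,x2) = (q1,p2)) \<and> ((y1,y2) = (p1,q2) \<or> (y1,y2) = (q1,p2)))"
    using e(2) assms(2) pr by (simp add: prod_eq_iff) blast
  then show ?thesis unfolding e(1) pt_edge_pair[OF e(2), unfolded pr] pr fst_conv snd_conv insert_iff empty_iff simp_thms .
qed


lemma qf_sum:
  assumes "finite V"
  shows "(\<Sum>x\<in>V. \<Sum>y\<in>V. cnj (v x) * (\<Sum>e\<in>E. f e x y) * v y)
       = (\<Sum>e\<in>E. \<Sum>x\<in>V. \<Sum>y\<in>V. cnj (v x) * f e x y * v y)"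
proof -
  have "(\<Sum>x\<in>V. \<Sum>y\<in>V. cnj (v x) * (\<Sum>e\<in>E. f e x y) * v y)
       = (\<Sum>x\<in>V. \<Sum>y\<in>V. \<Sum>e\<in>E. cnj (v x) * f e x y * v y)"
    by (simp add: sum_distrib_left sum_distrib_right)
  also have "\<dots> = (\<Sum>x\<in>V. \<Sum>e\<in>E. \<Sum>y\<in>V. cnj (v x) * f e x y * v y)"
    by (rule sum.cong[OF refl], rule sum.swap)
  also have "\<dots> = (\<Sum>e\<in>E. \<Sum>x\<in>V. \<Sum>y\<in>V. cnj (v x) * f e x y * v y)"
    by (rule sum.swap)
  finally show ?thesis .
qed

lemma qf_rank1:
  "(\<Sum>x\<in>V. \<Sum>y\<in>V. cnj (v x) * (u x * cnj (u y)) * v y)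
     = complex_of_real ((Re (\<Sum>x\<in>V. cnj (v x) * u x))\<^sup>2 + (Im (\<Sum>x\<in>V. cnj (v x) * u x))\<^sup>2)"
proof -
  let ?s = "\<Sum>x\<in>V. cnj (v x) * u x"
  have "(\<Sum>x\<in>V. \<Sum>y\<in>V. cnj (v x) * (u x * cnj (u y)) * v y)
      = (\<Sum>x\<in>V. cnj (v x) * u x) * (\<Sum>y\<in>V. cnj (u y) * v y)"
    by (subst sum_product) (simp add: mult_ac)
  also have "(\<Sum>y\<in>V. cnj (u y) * v y) = cnj ?s" by (simp add: mult.commute)
  finally show ?thesis by (simp only: complex_mult_cnj)
qed

lemma qf_scaled:
  "(\<Sum>x\<in>V. \<Sum>y\<in>V. cnj (v x) * (complex_of_real a * (u x * cnj (u y))) * v y)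
     = complex_of_real (a * ((Re (\<Sum>x\<in>V. cnj (v x) * u x))\<^sup>2 + (Im (\<Sum>x\<in>V. cnj (v x) * u x))\<^sup>2))"
proof -
  have "(\<Sum>x\<in>V. \<Sum>y\<in>V. cnj (v x) * (complex_of_real a * (u x * cnj (u y))) * v y)
     = complex_of_real a * (\<Sum>x\<in>V. \<Sum>y\<in>V. cnj (v x) * (u x * cnj (u y)) * v y)"
    by (simp add: sum_distrib_left mult_ac)
  then show ?thesis by (simp only: qf_rank1 of_real_mult)
qed

theorem mainTheorem9:
  fixes m1 m2 :: nat and EL EQ :: "edge set" and w :: "edge \<Rightarrow> real"
  assumes G: "hybrid_graph m1 m2 EL EQ w"
    and D: "\<forall>x\<in>grid m1 m2. \<forall>y\<in>grid m1 m2.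
              degree_matrix (EL \<union> EQ) w x y
              = degree_matrix (pt_edge ` EL \<union> pt_edge ` EQ) (pt_weight w) x y"
  shows "psd (grid m1 m2) (ptranspose2 (density EL EQ w))
       \<and> psd (grid m1 m2) (ptranspose1 (density EL EQ w))"
proof -
  define V where "V = grid m1 m2"
  define W where "W = (\<Sum>e\<in>EL \<union> EQ. w e)"
  define c where "c = complex_of_real (1 / W)"
  have finV: "finite V" unfolding V_def grid_def by simp
  have disj: "EL \<inter> EQ = {}" and edg: "\<And>e. e \<in> EL \<union> EQ \<Longrightarrow> card e = 2 \<and> e \<subseteq> V \<and> w e > 0"
    using G unfolding hybrid_graph_def V_def by auto
  have finEL: "finite EL" by (rule finite_subset[of _ "Pow V"]) (use edg finV in auto)
  have finEQ: "finite EQ" by (rule finite_subset[of _ "Pow V"]) (use edg finV in auto)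
  have cardL: "\<And>e. e \<in> EL \<Longrightarrow> card e = 2" using edg by auto
  have cardQ: "\<And>e. e \<in> EQ \<Longrightarrow> card e = 2" using edg by auto
  have W0: "W \<ge> 0" unfolding W_def by (rule sum_nonneg) (use edg in force)
  have injpt: "inj_on pt_edge (EL \<union> EQ)"
    by (rule inj_on_inverseI[of _ pt_edge]) (use edg pt_edge_card in auto)
  define M where "M x y = c * ((\<Sum>e\<in>EL. complex_of_real (w e) * (ket_L (pt_edge e) x * cnj (ket_L (pt_edge e) y)))
      + (\<Sum>e\<in>EQ. complex_of_real (w e) * (ket_Q (pt_edge e) x * cnj (ket_Q (pt_edge e) y))))" for x y
  have dens: "density EL EQ w a b = c * ((\<Sum>e\<in>EL. complex_of_real (w e) * (if a \<in> e \<and> b \<in> e then (if a = b then 1/2 else -1/2) else 0))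
      + (\<Sum>e\<in>EQ. complex_of_real (w e) * (if a \<in> e \<and> b \<in> e then 1/2 else 0)))" for a b
    unfolding density_def c_def W_def
    by (simp add: mult.assoc ketL_prod[OF cardL] ketQ_prod cong: sum.cong)
  have Mform: "M x y = c * ((\<Sum>e\<in>EL. complex_of_real (w e) * (if x \<in> pt_edge e \<and> y \<in> pt_edge e then (if x = y then 1/2 else -1/2) else 0))
      + (\<Sum>e\<in>EQ. complex_of_real (w e) * (if x \<in> pt_edge e \<and> y \<in> pt_edge e then 1/2 else 0)))" for x y
    unfolding M_def
    by (simp add: ketL_prod[OF pt_edge_card(1)[OF cardL]] ketQ_prod cong: sum.cong)
  have stepA: "ptranspose2 (density EL EQ w) x y = M x y" if xy: "x \<in> V" "y \<in> V" for x y
  proof (cases "x = y")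
    case False
    have ab: "(fst x, snd y) \<noteq> (fst y, snd x)" using False by (auto simp: prod_eq_iff)
    show ?thesis
      unfolding ptranspose2_def dens Mform
      using ab False pt_edge_mem[OF cardL False] pt_edge_mem[OF cardQ False]
      by (auto intro!: sum.cong arg_cong2[where f="(+)"] arg_cong2[where f="(*)"])
  next
    case True
    have xx: "(fst x, snd x) = x" by simp
    have deg1: "wdegree (EL \<union> EQ) w x = (\<Sum>e\<in>EL. if x \<in> e then w e else 0) + (\<Sum>e\<in>EQ. if x \<in> e then w e else 0)"
      unfolding wdegree_def sum.inter_filter[OF finite_UnI[OF finEL finEQ]]
      using finEL finEQ disj by (rule sum.union_disjoint)
    have "wdegree (pt_edge ` EL \<union> pt_edge ` EQ) (pt_weight w) x
        = (\<Sum>f\<in>pt_edge ` (EL \<union> EQ). if x \<in> f then pt_weight w f else 0)"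
      unfolding wdegree_def sum.inter_filter[OF finite_UnI[OF finite_imageI[OF finEL] finite_imageI[OF finEQ]]]
      by (simp add: image_Un)
    also have "\<dots> = (\<Sum>e\<in>EL \<union> EQ. if x \<in> pt_edge e then w e else 0)"
      by (subst sum.reindex[OF injpt]) (use edg pt_edge_card in \<open>auto simp: pt_weight_def intro!: sum.cong\<close>)
    also have "\<dots> = (\<Sum>e\<in>EL. if x \<in> pt_edge e then w e else 0) + (\<Sum>e\<in>EQ. if x \<in> pt_edge e then w e else 0)"
      using finEL finEQ disj by (simp add: sum.union_disjoint)
    finally have deg2: "wdegree (pt_edge ` EL \<union> pt_edge ` EQ) (pt_weight w) x = \<dots>" .
    have degeq: "(\<Sum>e\<in>EL. if x \<in> e then w e else 0) + (\<Sum>e\<in>EQ. if x \<in> e then w e else 0)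
       = (\<Sum>e\<in>EL. if x \<in> pt_edge e then w e else 0) + (\<Sum>e\<in>EQ. if x \<in> pt_edge e then w e else 0)"
    proof -
      have "wdegree (EL \<union> EQ) w x = wdegree (pt_edge ` EL \<union> pt_edge ` EQ) (pt_weight w) x"
        using D xy(1) unfolding V_def degree_matrix_def by (metis of_real_eq_iff)
      then show ?thesis unfolding deg1 deg2 .
    qed
    have conv: "(\<Sum>e\<in>E. complex_of_real (w e) * (if P e then 1/2 else 0))
        = complex_of_real ((\<Sum>e\<in>E. if P e then w e else 0) / 2)" for E P
      by (auto simp add: sum_divide_distrib intro!: sum.cong)
    have "ptranspose2 (density EL EQ w) x y = c * ((\<Sum>e\<in>EL. complex_of_real (w e) * (if x \<in> e then 1/2 else 0))
      + (\<Sum>e\<in>EQ. complex_of_real (w e) * (if x \<in> e then 1/2 else 0)))"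
      unfolding ptranspose2_def dens True xx by simp
    also have "\<dots> = c * complex_of_real (((\<Sum>e\<in>EL. if x \<in> e then w e else 0) + (\<Sum>e\<in>EQ. if x \<in> e then w e else 0)) / 2)"
      by (simp only: conv add_divide_distrib of_real_add)
    also have "\<dots> = c * complex_of_real (((\<Sum>e\<in>EL. if x \<in> pt_edge e then w e else 0) + (\<Sum>e\<in>EQ. if x \<in> pt_edge e then w e else 0)) / 2)"
      using degeq by simp
    also have "\<dots> = c * ((\<Sum>e\<in>EL. complex_of_real (w e) * (if x \<in> pt_edge e then 1/2 else 0))
      + (\<Sum>e\<in>EQ. complex_of_real (w e) * (if x \<in> pt_edge e then 1/2 else 0)))"
      by (simp only: conv add_divide_distrib of_real_add)
    also have "\<dots> = M x y" unfolding Mform True by simp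
    finally show ?thesis .
  qed
  have stepB: "ptranspose1 (density EL EQ w) x y = ptranspose2 (density EL EQ w) x y" for x y
    unfolding ptranspose1_def ptranspose2_def dens
    by (auto intro!: sum.cong arg_cong2[where f="(+)"] arg_cong2[where f="(*)"])
  have psdM: "psd V M"
    unfolding psd_def Let_def
  proof
    fix v :: "vtx \<Rightarrow> complex"
    define sL where "sL e = (\<Sum>x\<in>V. cnj (v x) * ket_L (pt_edge e) x)" for e
    define sQ where "sQ e = (\<Sum>x\<in>V. cnj (v x) * ket_Q (pt_edge e) x)" for e
    define r where "r = 1 / W * ((\<Sum>e\<in>EL. w e * ((Re (sL e))\<^sup>2 + (Im (sL e))\<^sup>2))
       + (\<Sum>e\<in>EQ. w e * ((Re (sQ e))\<^sup>2 + (Im (sQ e))\<^sup>2)))"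
    have r0: "r \<ge> 0" unfolding r_def using W0 edg
      by (intro mult_nonneg_nonneg add_nonneg_nonneg sum_nonneg) (auto intro: less_imp_le)
    have "(\<Sum>x\<in>V. \<Sum>y\<in>V. cnj (v x) * M x y * v y)
       = c * ((\<Sum>x\<in>V. \<Sum>y\<in>V. cnj (v x) * (\<Sum>e\<in>EL. complex_of_real (w e) * (ket_L (pt_edge e) x * cnj (ket_L (pt_edge e) y))) * v y)
          + (\<Sum>x\<in>V. \<Sum>y\<in>V. cnj (v x) * (\<Sum>e\<in>EQ. complex_of_real (w e) * (ket_Q (pt_edge e) x * cnj (ket_Q (pt_edge e) y))) * v y))"
      unfolding M_def by (simp add: sum_distrib_left sum.distrib algebra_simps)
    also have "\<dots> = complex_of_real r"
      unfolding qf_sum[OF finV] qf_scaled r_def c_def sL_def sQ_def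
      by (simp only: of_real_sum of_real_mult of_real_add)
    finally have "(\<Sum>x\<in>V. \<Sum>y\<in>V. cnj (v x) * M x y * v y) = complex_of_real r" .
    then show "(\<Sum>x\<in>V. \<Sum>y\<in>V. cnj (v x) * M x y * v y) \<in> \<real> \<and>
          0 \<le> Re (\<Sum>x\<in>V. \<Sum>y\<in>V. cnj (v x) * M x y * v y)" using r0 by simp
  qed
  have cong: "psd V A" if "psd V B" "\<And>x y. x \<in> V \<Longrightarrow> y \<in> V \<Longrightarrow> A x y = B x y" for A B
  proof -
    have "(\<Sum>x\<in>V. \<Sum>y\<in>V. cnj (v x) * A x y * v y) = (\<Sum>x\<in>V. \<Sum>y\<in>V. cnj (v x) * B x y * v y)" for v
      using that(2) by (auto intro!: sum.cong)
    then show ?thesis using that(1) unfolding psd_def by simp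
  qed
  have p2: "psd V (ptranspose2 (density EL EQ w))" by (rule cong[OF psdM stepA])
  have p1: "psd V (ptranspose1 (density EL EQ w))" by (rule cong[OF psdM]) (simp add: stepB stepA)
  show ?thesis using p1 p2 unfolding V_def by simp
qed

end
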